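(* The linear operator $\bar P:\text{Ш}_e(A)\bar\otimes\text{Ш}_e(A)\to\text{Ш}_e(A)\bar\otimes\text{Ш}_e(A)$, $$\bar P(\mathfrak{a}\bar\otimes\mathfrak{b})=P_e(\mathfrak{a})\bar\otimes\varepsilon_e(\mathfrak{b})1_A+\mu\,\mathfrak{a}\bar\otimes\varepsilon_e(\mathfrak{b})1_A+\mathfrak{a}\bar\otimes P_e(\mathfrak{b}),$$ is an extended Rota-Baxter operator of weight $(\lambda,\kappa)$ on the commutative algebra $\text{Ш}_e(A)\bar\otimes\text{Ш}_e(A)$.
   Context: $\mathbf{k}$ is a commutative unitary ring, $\lambda,\kappa\in\mathbf{k}$, and $\mu\in\mathbf{k}$ a root of $t^2-\lambda t+\kappa$. An extended Rota-Baxter operator of weight $(\lambda,\kappa)$ on an algebra $R$ is a linear $P$ with $P(x)P(y)=P(xP(y))+P(P(x)y)+\lambda P(xy)+\kappa xy$. $A=(A,m_A,\mu_A,\Delta_A,\varepsilon_A)$ is a commutative bialgebra and $(\text{Ш}_e(A),\diamond,P_e,j_A)$ the free commutative extended Rota-Baxter algebra of weight $(\lambda,\kappa)$ on $A$: $\text{Ш}_e(A)=\bigoplus_{n\ge1}A^{\otimes n}$, $P_e(\mathfrak{a})=1_A\otimes\mathfrak{a}$, with product $\diamond$ defined recursively by $a_0\diamond b_0=a_0b_0$, $a_0\diamond(b_0\otimes\mathfrak{b}')=a_0b_0\otimes\mathfrak{b}'$, $(a_0\otimes\mathfrak{a}')\diamond b_0=a_0b_0\otimes\mathfrak{a}'$,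 and $(a_0\otimes\mathfrak{a}')\diamond(b_0\otimes\mathfrak{b}')=a_0b_0\otimes(\mathfrak{a}'\diamond(1_A\otimes\mathfrak{b}')+(1_A\otimes\mathfrak{a}')\diamond\mathfrak{b}'+\lambda\mathfrak{a}'\diamond\mathfrak{b}')+\kappa a_0b_0(\mathfrak{a}'\diamond\mathfrak{b}')$. $\varepsilon_e:\text{Ш}_e(A)\to\mathbf{k}$ is the unique extended Rota-Baxter algebra homomorphism with $\varepsilon_e\circ j_A=\varepsilon_A$ and $\varepsilon_e\circ P_e=-\mu\,\varepsilon_e$. $\bar\otimes$ denotes the tensor product between copies of $\text{Ш}_e(A)$ (to distinguish it from the tensor inside $\text{Ш}_e(A)$); $\text{Ш}_e(A)\bar\otimes\text{Ш}_e(A)$ has the componentwise product. *)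

theory Defs
  imports Complex_Main
begin

definition comm_kalg :: "('k::comm_ring_1 \<Rightarrow> 'r::comm_ring_1 \<Rightarrow> 'r) \<Rightarrow> bool" where
  "comm_kalg s \<longleftrightarrow> module s \<and> (\<forall>c x y. s c (x * y) = s c x * y)"

definition kalg_hom ::
  "('k::comm_ring_1 \<Rightarrow> 'r::comm_ring_1 \<Rightarrow> 'r) \<Rightarrow> ('k \<Rightarrow> 's::comm_ring_1 \<Rightarrow> 's) \<Rightarrow> ('r \<Rightarrow> 's) \<Rightarrow> bool" where
  "kalg_hom s1 s2 f \<longleftrightarrow> module_hom s1 s2 f \<and> (\<forall>x y. f (x * y) = f x * f y) \<and> f 1 = 1"

definition ext_RB_op ::
  "('k::comm_ring_1 \<Rightarrow> 'r::comm_ring_1 \<Rightarrow> 'r) \<Rightarrow> 'k \<Rightarrow> 'k \<Rightarrow> ('r \<Rightarrow> 'r) \<Rightarrow> bool" where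
  "ext_RB_op s lam kap P \<longleftrightarrow> module_hom s s P \<and>
     (\<forall>x y. P x * P y = P (x * P y) + P (P x * y) + s lam (P (x * y)) + s kap (x * y))"

end

theory Submission
  imports Defs
begin

theorem lemma4p3:
  fixes lam kap mu :: "'k::comm_ring_1"
    and sA :: "'k \<Rightarrow> 'a::comm_ring_1 \<Rightarrow> 'a" and epsA :: "'a \<Rightarrow> 'k"
    and sR :: "'k \<Rightarrow> 'r::comm_ring_1 \<Rightarrow> 'r" and Pe :: "'r \<Rightarrow> 'r"
    and jA :: "'a \<Rightarrow> 'r" and epse :: "'r \<Rightarrow> 'k"
    and sT :: "'k \<Rightarrow> 't::comm_ring_1 \<Rightarrow> 't" and tp :: "'r \<Rightarrow> 'r \<Rightarrow> 't"
    and Pbar :: "'t \<Rightarrow> 't"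
  assumes mu_root: "mu ^ 2 - lam * mu + kap = 0"
    \<comment> \<open>A: commutative k-algebra with counit an algebra map\<close>
    and A_alg: "comm_kalg sA"
    and epsA_hom: "kalg_hom sA (*) epsA"
    \<comment> \<open>Sh_e(A): commutative ext. RB algebra of weight (lam,kap) with structure map jA\<close>
    and R_alg: "comm_kalg sR"
    and Pe_RB: "ext_RB_op sR lam kap Pe"
    and jA_hom: "kalg_hom sA sR jA"
    \<comment> \<open>eps_e: ext. RB algebra hom with eps_e o jA = eps_A and eps_e o Pe = - mu eps_e\<close>
    and epse_hom: "kalg_hom sR (*) epse"
    and epse_j: "\<And>a. epse (jA a) = epsA a"
    and epse_P: "\<And>x. epse (Pe x) = - mu * epse x"
    \<comment> \<open>T = Sh_e(A) (x) Sh_e(A): commutative k-algebra with bilinear tp, componentwise product,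
        spanned by pure tensors\<close>
    and T_alg: "comm_kalg sT"
    and tp_lin1: "\<And>b. module_hom sR sT (\<lambda>a. tp a b)"
    and tp_lin2: "\<And>a. module_hom sR sT (\<lambda>b. tp a b)"
    and tp_mult: "\<And>a b c d. tp a b * tp c d = tp (a * c) (b * d)"
    and tp_one: "tp 1 1 = 1"
    and tp_span: "module.span sT (range (\<lambda>(a, b). tp a b)) = UNIV"
    \<comment> \<open>the linear operator Pbar\<close>
    and Pbar_lin: "module_hom sT sT Pbar"
    and Pbar_tp: "\<And>a b. Pbar (tp a b) =
        tp (Pe a) (sR (epse b) 1) + sT mu (tp a (sR (epse b) 1)) + tp a (Pe b)"
  shows "ext_RB_op sT lam kap Pbar"
proof -
  interpret mR: module sR using R_alg by (simp add: comm_kalg_def)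
  interpret mT: module sT using T_alg by (simp add: comm_kalg_def)
  define phi where "phi c = sT c 1" for c
  define psi where "psi c = sR c 1" for c
  define L where "L u = tp u 1" for u
  define Rt where "Rt v = tp 1 v" for v
  have sT_eq: "sT c x = phi c * x" for c x
    using T_alg unfolding comm_kalg_def phi_def by (metis mult_1)
  have sR_eq: "sR c x = psi c * x" for c x
    using R_alg unfolding comm_kalg_def psi_def by (metis mult_1)
  have phi_mult: "phi (c * d) = phi c * phi d" for c d
    by (metis mT.scale_scale phi_def sT_eq)
  have phi_add: "phi (c + d) = phi c + phi d" for c d
    by (simp add: phi_def mT.scale_left_distrib)
  have phi_minus: "phi (- c) = - phi c" for c
    by (simp add: phi_def)
  have phi_diff: "phi (c - d) = phi c - phi d" for c d
    by (simp add: phi_def mT.scale_left_diff_distrib)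
  have phi_one: "phi 1 = 1" by (simp add: phi_def)
  have tp_LR: "tp u v = L u * Rt v" for u v
    by (simp add: L_def Rt_def tp_mult)
  have L_add: "L (x + y) = L x + L y" for x y
    using module_hom.add[OF tp_lin1] by (simp add: L_def)
  have Rt_add: "Rt (x + y) = Rt x + Rt y" for x y
    using module_hom.add[OF tp_lin2] by (simp add: Rt_def)
  have L_mult: "L (x * y) = L x * L y" for x y
    by (simp add: L_def tp_mult)
  have Rt_mult: "Rt (x * y) = Rt x * Rt y" for x y
    by (simp add: Rt_def tp_mult)
  have L_psi: "L (psi c) = phi c" for c
    using module_hom.scale[OF tp_lin1, where r=c and b=1] by (simp add: L_def psi_def phi_def tp_one)
  have Rt_psi: "Rt (psi c) = phi c" for c
    using module_hom.scale[OF tp_lin2, where r=c and b=1] by (simp add: Rt_def psi_def phi_def tp_one)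
  have Pe_lin: "module_hom sR sR Pe" using Pe_RB by (simp add: ext_RB_op_def)
  have Pe_add: "Pe (x + y) = Pe x + Pe y" for x y using module_hom.add[OF Pe_lin] .
  have Pe_psi: "Pe (psi c * x) = psi c * Pe x" for c x
    using module_hom.scale[OF Pe_lin, of c x] by (simp add: sR_eq)
  have RB: "Pe x * Pe y = Pe (x * Pe y) + Pe (Pe x * y) + psi lam * Pe (x * y) + psi kap * (x * y)" for x y
    using Pe_RB by (simp add: ext_RB_op_def sR_eq)
  have e_lin: "module_hom sR (*) epse" using epse_hom by (simp add: kalg_hom_def)
  have e_add: "epse (x + y) = epse x + epse y" for x y using module_hom.add[OF e_lin] .
  have e_mult: "epse (x * y) = epse x * epse y" for x y using epse_hom by (simp add: kalg_hom_def)
  have e_psi: "epse (psi c) = c" for c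
    using module_hom.scale[OF e_lin, of c 1] epse_hom by (simp add: kalg_hom_def psi_def)
  have Pb_add: "Pbar (x + y) = Pbar x + Pbar y" for x y using module_hom.add[OF Pbar_lin] .
  have Pb_phi: "Pbar (phi c * x) = phi c * Pbar x" for c x
    using module_hom.scale[OF Pbar_lin, of c x] by (simp add: sT_eq)
  have Pb_phi2: "Pbar (x * phi c) = phi c * Pbar x" for c x
    by (metis Pb_phi mult.commute)
  have Pb_phi3: "Pbar (x * (y * phi c)) = phi c * Pbar (x * y)" for c x y
    by (metis Pb_phi mult.commute mult.left_commute)
  have Pb_LR: "Pbar (L u * Rt v) = phi (epse v) * (L (Pe u) + phi mu * L u) + L u * Rt (Pe v)" for u v
    using Pbar_tp[of u v] by (simp add: tp_LR sT_eq sR_eq Rt_psi algebra_simps)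
  have mu_phi: "phi mu * phi mu - phi lam * phi mu + phi kap = 0"
  proof -
    have "phi (mu ^ 2 - lam * mu + kap) = 0" using mu_root by (simp add: phi_def)
    moreover have "phi (mu ^ 2 - lam * mu + kap) = phi mu * phi mu - phi lam * phi mu + phi kap"
      by (simp only: phi_add phi_diff power2_eq_square phi_mult)
    ultimately show ?thesis by simp
  qed
  define D where "D x y = Pbar x * Pbar y - (Pbar (x * Pbar y) + Pbar (Pbar x * y) + phi lam * Pbar (x * y) + phi kap * (x * y))" for x y
  have pure: "D (L a * Rt b) (L c * Rt d) = 0" for a b c d
  proof -
    have RBL: "L (Pe a) * L (Pe c) = L (Pe (a * Pe c)) + L (Pe (Pe a * c)) + phi lam * L (Pe (a * c)) + phi kap * (L a * L c)"
      using arg_cong[OF RB[of a c], of L] by (simp add: L_add L_mult L_psi)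
    have RBR: "Rt (Pe b) * Rt (Pe d) = Rt (Pe (b * Pe d)) + Rt (Pe (Pe b * d)) + phi lam * Rt (Pe (b * d)) + phi kap * (Rt b * Rt d)"
      using arg_cong[OF RB[of b d], of Rt] by (simp add: Rt_add Rt_mult Rt_psi)
    have RBL': "L (Pe (a * Pe c)) = L (Pe a) * L (Pe c) - L (Pe (Pe a * c)) - phi lam * L (Pe (a * c)) - phi kap * (L a * L c)"
      using RBL by (simp add: algebra_simps)
    have RBR': "Rt (Pe (b * Pe d)) = Rt (Pe b) * Rt (Pe d) - Rt (Pe (Pe b * d)) - phi lam * Rt (Pe (b * d)) - phi kap * (Rt b * Rt d)"
      using RBR by (simp add: algebra_simps)
    have kap': "phi kap = phi lam * phi mu - phi mu * phi mu"
      using mu_phi by (simp add: algebra_simps eq_neg_iff_add_eq_0 add.commute)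
    have h1: "L a * Rt b * Pbar (L c * Rt d) = phi (epse d) * (L (a * Pe c) * Rt b) + phi (epse d * mu) * (L (a * c) * Rt b) + L (a * c) * Rt (b * Pe d)"
      by (simp add: Pb_LR L_mult Rt_mult phi_mult algebra_simps)
    have h2: "Pbar (L a * Rt b) * (L c * Rt d) = phi (epse b) * (L (Pe a * c) * Rt d) + phi (epse b * mu) * (L (a * c) * Rt d) + L (a * c) * Rt (Pe b * d)"
      by (simp add: Pb_LR L_mult Rt_mult phi_mult algebra_simps)
    have h3: "L a * Rt b * (L c * Rt d) = L (a * c) * Rt (b * d)"
      by (simp add: L_mult Rt_mult algebra_simps)
    show ?thesis
      unfolding D_def h1 h2 h3
      apply (simp only: Pb_add Pb_phi Pb_LR)
      apply (simp only: L_mult Rt_mult L_add Pe_add e_mult e_add epse_P phi_mult phi_add phi_minus)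
      apply (simp only: RBL' RBR' kap')
      apply (simp add: algebra_simps)
      done
  qed
  have Pb0: "Pbar 0 = 0" using module_hom.zero[OF Pbar_lin] .
  have linL: "D (phi c * z + w) y = phi c * D z y + D w y" for c z w y
    unfolding D_def
    by (simp add: Pb_add Pb_phi distrib_right distrib_left mult.assoc right_diff_distrib,
        (simp add: algebra_simps Pb_add Pb_phi Pb_phi2 Pb_phi3)?)
  have linR: "D y (phi c * z + w) = phi c * D y z + D y w" for c z w y
    unfolding D_def
    by (simp add: Pb_add Pb_phi distrib_right distrib_left mult.left_commute right_diff_distrib,
        (simp add: algebra_simps Pb_add Pb_phi Pb_phi2 Pb_phi3)?)
  have D0L: "D 0 y = 0" for y by (simp add: D_def Pb0)
  have D0R: "D y 0 = 0" for y by (simp add: D_def Pb0)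
  have step1: "D x (tp c d) = 0" for x c d
  proof -
    have "x \<in> mT.span (range (\<lambda>(a, b). tp a b))" using tp_span by simp
    then show ?thesis
    proof (induction rule: mT.span_induct_alt)
      case base then show ?case by (rule D0L)
    next
      case (step k z w)
      then obtain a b where "z = tp a b" by auto
      then show ?case using step pure linL[of k z w "tp c d"] by (simp add: sT_eq tp_LR)
    qed
  qed
  have allD: "D x y = 0" for x y
  proof -
    have "y \<in> mT.span (range (\<lambda>(a, b). tp a b))" using tp_span by simp
    then show ?thesis
    proof (induction rule: mT.span_induct_alt)
      case base then show ?case by (rule D0R)
    next
      case (step k z w)
      then obtain a b where "z = tp a b" by auto
      then show ?case using step step1 linR[of x k z w] by (simp add: sT_eq)
    qed
  qed
  show ?thesis
    unfolding ext_RB_op_def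
  proof (intro conjI allI Pbar_lin)
    fix x y
    show "Pbar x * Pbar y = Pbar (x * Pbar y) + Pbar (Pbar x * y) + sT lam (Pbar (x * y)) + sT kap (x * y)"
      using allD[of x y] by (simp add: D_def sT_eq)
  qed
qed

end
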